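(* Let $g$ be a real $M\times M$ matrix, $g\neq 0$, all of whose singular values are equal (i.e. the largest singular value has multiplicity $d=M$). Then there exist finite-dimensional Hilbert spaces $\mathcal H_1,\mathcal H_2$, a state $\rho$ on $\mathcal H_1\otimes\mathcal H_2$ and observables $\mathcal A_i(x)$, $x=1,\dots,M$ (Hermitian, eigenvalues in $[-1,1]$) with $\sum_{x_1,x_2=1}^M g_{x_1,x_2}\operatorname{tr}(\rho\,\mathcal A_1(x_1)\otimes\mathcal A_2(x_2))=M\,\|g\|_2$; i.e. the bound $\sqrt{M_1M_2}\|g\|_2$ of Theorem 1 is attained.
   Context: $\|g\|_2$ denotes the largest singular value of $g$. *)

theory Defs
  imports "Jordan_Normal_Form.Char_Poly"
begin

definition herm :: "nat \<Rightarrow> complex mat \<Rightarrow> bool" where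
  "herm n A \<longleftrightarrow> A \<in> carrier_mat n n \<and>
     (\<forall>i<n. \<forall>j<n. A $$ (j, i) = cnj (A $$ (i, j)))"

definition observable :: "nat \<Rightarrow> complex mat \<Rightarrow> bool" where
  "observable n A \<longleftrightarrow> herm n A \<and>
     (\<forall>k. eigenvalue A k \<longrightarrow> Im k = 0 \<and> -1 \<le> Re k \<and> Re k \<le> 1)"

definition mtrace :: "complex mat \<Rightarrow> complex" where
  "mtrace A = (\<Sum>i<dim_row A. A $$ (i, i))"

definition density :: "nat \<Rightarrow> complex mat \<Rightarrow> bool" where
  "density n \<rho> \<longleftrightarrow> herm n \<rho> \<and>
     (\<forall>k. eigenvalue \<rho> k \<longrightarrow> Im k = 0 \<and> 0 \<le> Re k) \<and> mtrace \<rho> = 1"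

definition kron :: "complex mat \<Rightarrow> complex mat \<Rightarrow> complex mat" where
  "kron A B = mat (dim_row A * dim_row B) (dim_col A * dim_col B)
     (\<lambda>(i, j). A $$ (i div dim_row B, j div dim_col B) * B $$ (i mod dim_row B, j mod dim_col B))"

definition singular_value :: "real mat \<Rightarrow> real \<Rightarrow> bool" where
  "singular_value g s \<longleftrightarrow> 0 \<le> s \<and> eigenvalue (transpose_mat g * g) (s\<^sup>2)"

definition norm2 :: "real mat \<Rightarrow> real" where
  "norm2 g = Max {s. singular_value g s}"

end

theory Submission
  imports Defs "Jordan_Normal_Form.Schur_Decomposition"
begin


definition Tm :: "real mat \<Rightarrow> nat \<Rightarrow> real \<Rightarrow> real mat" where
  "Tm g M \<sigma> = mat M M (\<lambda>(i,j). (\<Sum>k<M. g$$(k,i)*g$$(k,j)) - (if i=j then \<sigma>^2 else 0))"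

lemma Tm_carrier[simp]: "Tm g M \<sigma> \<in> carrier_mat M M" by (simp add: Tm_def)
lemma Tm_dim[simp]: "dim_row (Tm g M \<sigma>) = M" "dim_col (Tm g M \<sigma>) = M" by (simp_all add: Tm_def)

lemma Tm_index: "i < M \<Longrightarrow> j < M \<Longrightarrow> Tm g M \<sigma> $$ (i,j) = (\<Sum>k<M. g$$(k,i)*g$$(k,j)) - (if i=j then \<sigma>^2 else 0)"
  by (simp add: Tm_def)

lemma Tm_sym: "i < M \<Longrightarrow> j < M \<Longrightarrow> Tm g M \<sigma> $$ (i,j) = Tm g M \<sigma> $$ (j,i)"
  by (simp add: Tm_index mult.commute)

lemma S_index:
  assumes g: "g \<in> carrier_mat M M" and i: "i < M" and j: "j < M"
  shows "(transpose_mat g * g) $$ (i,j) = (\<Sum>k<M. g$$(k,i)*g$$(k,j))"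
  using g i j by (simp add: scalar_prod_def lessThan_atLeast0)

lemma Tm_real_eig:
  assumes g: "g \<in> carrier_mat M M"
    and H: "\<forall>s. singular_value g s \<longleftrightarrow> s = \<sigma>"
    and ev: "eigenvalue (Tm g M \<sigma>) \<mu>"
  shows "\<mu> = 0"
proof -
  from ev obtain v where v: "v \<in> carrier_vec M" "v \<noteq> 0\<^sub>v M" and Tv: "Tm g M \<sigma> *\<^sub>v v = \<mu> \<cdot>\<^sub>v v"
    unfolding eigenvalue_def eigenvector_def by auto
  have dv: "dim_vec v = M" using v by auto
  have Tvi: "(\<Sum>j<M. Tm g M \<sigma> $$ (i,j) * v$j) = \<mu> * v$i" if i: "i < M" for i
  proof -
    have "(Tm g M \<sigma> *\<^sub>v v) $ i = \<mu> * v$i" using Tv i dv by simp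
    thus ?thesis using i dv by (simp add: scalar_prod_def lessThan_atLeast0)
  qed
  let ?S = "transpose_mat g * g"
  have S: "?S \<in> carrier_mat M M" using g by auto
  have Svi: "(\<Sum>j<M. ?S $$ (i,j) * v$j) = (\<mu> + \<sigma>^2) * v$i" if i: "i < M" for i
  proof -
    have "(\<Sum>j<M. ?S $$ (i,j) * v$j) = (\<Sum>j<M. Tm g M \<sigma> $$ (i,j) * v$j + (if i = j then \<sigma>^2 * v$j else 0))"
      by (rule sum.cong, simp, simp add: S_index[OF g i] Tm_index i algebra_simps)
    also have "\<dots> = \<mu> * v$i + \<sigma>^2 * v$i" using i by (simp add: sum.distrib Tvi)
    finally show ?thesis by (simp add: algebra_simps)
  qed
  have Sv: "?S *\<^sub>v v = (\<mu> + \<sigma>^2) \<cdot>\<^sub>v v"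
    by (rule eq_vecI, insert S dv Svi, auto simp: scalar_prod_def lessThan_atLeast0)
  have evS: "eigenvalue ?S (\<mu> + \<sigma>^2)"
    unfolding eigenvalue_def eigenvector_def using v Sv S g by auto
  have "(\<mu> + \<sigma>^2) * (\<Sum>i<M. v$i * v$i) = (\<Sum>i<M. v$i * (\<Sum>j<M. ?S $$ (i,j) * v$j))"
  proof -
    have "(\<Sum>i<M. v$i * (\<Sum>j<M. ?S $$ (i,j) * v$j)) = (\<Sum>i<M. v$i * ((\<mu> + \<sigma>^2) * v$i))"
      by (rule sum.cong, simp, simp add: Svi)
    thus ?thesis by (simp add: sum_distrib_left algebra_simps)
  qed
  also have "\<dots> = (\<Sum>i<M. \<Sum>j<M. \<Sum>k<M. (g$$(k,i) * v$i) * (g$$(k,j) * v$j))"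
    by (rule sum.cong, simp, simp add: S_index[OF g] sum_distrib_left sum_distrib_right algebra_simps)
  also have "\<dots> = (\<Sum>i<M. \<Sum>k<M. \<Sum>j<M. (g$$(k,i) * v$i) * (g$$(k,j) * v$j))"
    by (rule sum.cong[OF refl], rule sum.swap)
  also have "\<dots> = (\<Sum>k<M. \<Sum>i<M. \<Sum>j<M. (g$$(k,i) * v$i) * (g$$(k,j) * v$j))"
    by (rule sum.swap)
  also have "\<dots> = (\<Sum>k<M. (\<Sum>i<M. g$$(k,i) * v$i) * (\<Sum>j<M. g$$(k,j) * v$j))"
    by (simp add: sum_product)
  also have "\<dots> \<ge> 0" by (intro sum_nonneg, simp)
  finally have nn: "0 \<le> (\<mu> + \<sigma>^2) * (\<Sum>i<M. v$i * v$i)" .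
  have "\<exists>i<M. v $ i \<noteq> 0"
  proof (rule ccontr)
    assume "\<not> (\<exists>i<M. v $ i \<noteq> 0)"
    hence "v = 0\<^sub>v M" by (intro eq_vecI, auto simp: dv)
    with v show False by simp
  qed
  then obtain i where i: "i < M" "v $ i \<noteq> 0" by blast
  have pos: "0 < (\<Sum>i<M. v$i * v$i)"
  proof -
    have "0 < v$i * v$i" using i(2) by (metis not_real_square_gt_zero)
    thus ?thesis by (intro sum_pos2[of _ i], insert i, auto)
  qed
  have mpos: "0 \<le> \<mu> + \<sigma>^2" using nn pos by (simp add: zero_le_mult_iff)
  have "singular_value g (sqrt (\<mu> + \<sigma>^2))"
    unfolding singular_value_def using evS mpos by simp
  hence "sqrt (\<mu> + \<sigma>^2) = \<sigma>" using H by blast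
  hence "\<mu> + \<sigma>^2 = \<sigma>^2" using mpos by (metis real_sqrt_pow2)
  thus ?thesis by simp
qed



lemma Tc_eig_real:
  assumes ev: "eigenvalue (map_mat complex_of_real (Tm g M \<sigma>)) e"
  shows "Im e = 0"
proof -
  let ?T = "Tm g M \<sigma>"
  let ?Tc = "map_mat complex_of_real ?T"
  from ev obtain v where v: "v \<in> carrier_vec M" "v \<noteq> 0\<^sub>v M" and Tv: "?Tc *\<^sub>v v = e \<cdot>\<^sub>v v"
    unfolding eigenvalue_def eigenvector_def by auto
  have dv: "dim_vec v = M" using v by auto
  have Tvi: "(\<Sum>j<M. complex_of_real (?T $$ (i,j)) * v$j) = e * v$i" if i: "i < M" for i
  proof -
    have "(?Tc *\<^sub>v v) $ i = e * v$i" using Tv i dv by simp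
    thus ?thesis using i dv by (simp add: scalar_prod_def lessThan_atLeast0)
  qed
  define q where "q = (\<Sum>i<M. \<Sum>j<M. cnj (v$i) * complex_of_real (?T $$ (i,j)) * v$j)"
  have q1: "q = e * complex_of_real (\<Sum>i<M. (cmod (v$i))^2)"
  proof -
    have "q = (\<Sum>i<M. cnj (v$i) * (\<Sum>j<M. complex_of_real (?T $$ (i,j)) * v$j))"
      unfolding q_def by (simp add: sum_distrib_left mult.assoc)
    also have "\<dots> = (\<Sum>i<M. e * complex_of_real ((cmod (v$i))^2))"
    proof (rule sum.cong[OF refl])
      fix i assume "i \<in> {..<M}"
      hence i: "i < M" by simp
      have "cnj (v$i) * (\<Sum>j<M. complex_of_real (?T $$ (i,j)) * v$j) = cnj (v$i) * (e * v$i)"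
        using Tvi[OF i] by simp
      also have "\<dots> = e * (v$i * cnj (v$i))" by (simp add: algebra_simps)
      also have "\<dots> = e * complex_of_real ((cmod (v$i))^2)" using complex_norm_square[of "v$i"] by simp
      finally show "cnj (v$i) * (\<Sum>j<M. complex_of_real (?T $$ (i,j)) * v$j) = e * complex_of_real ((cmod (v$i))^2)" .
    qed
    finally show ?thesis by (simp add: sum_distrib_left)
  qed
  have "cnj q = (\<Sum>i<M. \<Sum>j<M. v$i * complex_of_real (?T $$ (i,j)) * cnj (v$j))"
    unfolding q_def by (simp add: cnj_sum)
  also have "\<dots> = (\<Sum>j<M. \<Sum>i<M. v$i * complex_of_real (?T $$ (i,j)) * cnj (v$j))"
    by (rule sum.swap)
  also have "\<dots> = q" unfolding q_def
  proof (rule sum.cong[OF refl], rule sum.cong[OF refl])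
    fix i j assume "i \<in> {..<M}" "j \<in> {..<M}"
    hence "?T $$ (j,i) = ?T $$ (i,j)" using Tm_sym[where i=i and j=j] by auto
    thus "v $ j * complex_of_real (?T $$ (j, i)) * cnj (v $ i) = cnj (v $ i) * complex_of_real (?T $$ (i, j)) * v $ j"
      by (simp add: algebra_simps)
  qed
  finally have "cnj q = q" .
  hence "Im (cnj q) = Im q" by (simp only:)
  hence Imq: "Im q = 0" by simp
  have "\<exists>i<M. v $ i \<noteq> 0"
  proof (rule ccontr)
    assume "\<not> (\<exists>i<M. v $ i \<noteq> 0)"
    hence "v = 0\<^sub>v M" by (intro eq_vecI, auto simp: dv)
    with v show False by simp
  qed
  then obtain i where i: "i < M" "v $ i \<noteq> 0" by blast
  have pos: "0 < (\<Sum>i<M. (cmod (v$i))^2)"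
    by (rule sum_pos2[of _ i], insert i, auto)
  from Imq q1 have "Im e * (\<Sum>i<M. (cmod (v$i))^2) = 0" by simp
  thus ?thesis using pos by simp
qed

lemma poly_linfactors_root: "(a::complex) \<in> set as \<Longrightarrow> poly (\<Prod>e\<leftarrow>as. [:- e, 1:]) a = 0"
proof (induct as)
  case (Cons b bs)
  then show ?case by (cases "a = b") (auto simp: mult_minus_left)
qed simp

lemma Tm_root_zero:
  assumes g: "g \<in> carrier_mat M M"
    and H: "\<forall>s. singular_value g s \<longleftrightarrow> s = \<sigma>"
    and r: "poly (char_poly (map_mat complex_of_real (Tm g M \<sigma>))) e = 0"
  shows "e = 0"
proof -
  let ?T = "Tm g M \<sigma>"
  let ?Tc = "map_mat complex_of_real ?T"
  have Tc: "?Tc \<in> carrier_mat M M" by simp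
  have "eigenvalue ?Tc e" using r eigenvalue_root_char_poly[OF Tc] by simp
  hence Ie: "Im e = 0" by (rule Tc_eig_real)
  hence e: "e = complex_of_real (Re e)" by (simp add: complex_eq_iff)
  have "char_poly ?Tc = map_poly complex_of_real (char_poly ?T)"
    by (rule of_real_hom.char_poly_hom[OF Tm_carrier])
  with r e have "complex_of_real (poly (char_poly ?T) (Re e)) = 0"
    by (metis of_real_hom.poly_map_poly)
  hence "poly (char_poly ?T) (Re e) = 0" by simp
  hence "eigenvalue ?T (Re e)" using eigenvalue_root_char_poly[OF Tm_carrier] by simp
  hence "Re e = 0" by (rule Tm_real_eig[OF g H])
  thus ?thesis using e by simp
qed

lemma mtrace_comm:
  assumes A: "A \<in> carrier_mat n m" and B: "B \<in> carrier_mat m n"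
  shows "mtrace (A * B) = mtrace (B * A)"
proof -
  have "mtrace (A * B) = (\<Sum>i<n. \<Sum>k<m. A $$ (i,k) * B $$ (k,i))"
    unfolding mtrace_def using A B by (simp add: scalar_prod_def lessThan_atLeast0)
  also have "\<dots> = (\<Sum>k<m. \<Sum>i<n. B $$ (k,i) * A $$ (i,k))"
    by (subst sum.swap, simp add: mult.commute)
  also have "\<dots> = mtrace (B * A)"
    unfolding mtrace_def using A B by (simp add: scalar_prod_def lessThan_atLeast0)
  finally show ?thesis .
qed

lemma mtrace_sim:
  assumes P: "P \<in> carrier_mat n n" and X: "X \<in> carrier_mat n n" and Q: "Q \<in> carrier_mat n n"
    and QP: "Q * P = 1\<^sub>m n"
  shows "mtrace (P * X * Q) = mtrace X"
proof -
  have "mtrace (P * X * Q) = mtrace (Q * (P * X))"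
    by (rule mtrace_comm[of _ n n], insert P X Q, auto)
  also have "Q * (P * X) = (Q * P) * X" using P X Q by (simp add: assoc_mult_mat)
  also have "\<dots> = X" using QP X by simp
  finally show ?thesis .
qed

lemma Tm_zero:
  assumes g: "g \<in> carrier_mat M M"
    and H: "\<forall>s. singular_value g s \<longleftrightarrow> s = \<sigma>"
  shows "\<forall>i<M. \<forall>j<M. Tm g M \<sigma> $$ (i,j) = 0"
proof -
  let ?T = "Tm g M \<sigma>"
  let ?Tc = "map_mat complex_of_real ?T"
  have Tc: "?Tc \<in> carrier_mat M M" by simp
  obtain as where cp: "char_poly ?Tc = (\<Prod>a\<leftarrow>as. [:- a, 1:])"
    using char_poly_factorized[OF Tc] by blast
  obtain B P Q where sd: "schur_decomposition ?Tc as = (B,P,Q)" by (metis prod_cases3)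
  from schur_decomposition[OF Tc cp sd]
  have sim: "similar_mat_wit ?Tc B P Q" and ut: "upper_triangular B" and dg: "diag_mat B = as" by auto
  from similar_mat_witD2[OF Tc sim] have QP: "Q * P = 1\<^sub>m M"
    and B: "B \<in> carrier_mat M M" and P: "P \<in> carrier_mat M M" and Q: "Q \<in> carrier_mat M M" by auto
  have Bd: "B $$ (i,i) = 0" if i: "i < M" for i
  proof -
    have "B $$ (i,i) \<in> set as" using dg[symmetric] B i by (auto simp: diag_mat_def)
    hence "poly (char_poly ?Tc) (B $$ (i,i)) = 0" unfolding cp by (rule poly_linfactors_root)
    thus ?thesis by (rule Tm_root_zero[OF g H])
  qed
  have BB: "mtrace (B * B) = 0"
  proof -
    have "mtrace (B * B) = (\<Sum>i<M. \<Sum>k<M. B $$ (i,k) * B $$ (k,i))"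
      unfolding mtrace_def using B by (simp add: scalar_prod_def lessThan_atLeast0)
    also have "\<dots> = 0"
    proof (intro sum.neutral ballI)
      fix i k assume "i \<in> {..<M}" "k \<in> {..<M}"
      hence i: "i < M" and k: "k < M" by auto
      show "B $$ (i,k) * B $$ (k,i) = 0"
      proof (cases "k < i")
        case True thus ?thesis using upper_triangularD[OF ut True] B i by simp
      next
        case False
        show ?thesis
        proof (cases "k = i")
          case True thus ?thesis using Bd i by simp
        next
          case False
          hence "i < k" using \<open>\<not> k < i\<close> by simp
          thus ?thesis using upper_triangularD[OF ut \<open>i < k\<close>] B k by simp
        qed
      qed
    qed
    finally show ?thesis .
  qed
  have sim2: "similar_mat_wit (?Tc ^\<^sub>m 2) (B ^\<^sub>m 2) P Q" by (rule similar_mat_wit_pow[OF sim])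
  have Tc2: "?Tc ^\<^sub>m 2 \<in> carrier_mat M M" using Tc by simp
  have "?Tc ^\<^sub>m 2 = P * (B ^\<^sub>m 2) * Q" using similar_mat_witD2[OF Tc2 sim2] by simp
  moreover have "?Tc ^\<^sub>m 2 = ?Tc * ?Tc" using Tc by (simp add: numeral_2_eq_2)
  moreover have "B ^\<^sub>m 2 = B * B" using B by (simp add: numeral_2_eq_2)
  ultimately have "?Tc * ?Tc = P * (B * B) * Q" by simp
  hence "mtrace (?Tc * ?Tc) = 0" using mtrace_sim[OF P _ Q QP, of "B * B"] B BB by simp
  moreover have "mtrace (?Tc * ?Tc) = complex_of_real (\<Sum>i<M. \<Sum>k<M. (?T $$ (i,k))^2)"
  proof -
    have "mtrace (?Tc * ?Tc) = (\<Sum>i<M. \<Sum>k<M. complex_of_real (?T $$ (i,k) * ?T $$ (k,i)))"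
      unfolding mtrace_def using Tc by (simp add: scalar_prod_def lessThan_atLeast0)
    also have "\<dots> = (\<Sum>i<M. \<Sum>k<M. complex_of_real ((?T $$ (i,k))^2))"
    proof (rule sum.cong[OF refl], rule sum.cong[OF refl])
      fix i k assume "i \<in> {..<M}" "k \<in> {..<M}"
      hence "?T $$ (k,i) = ?T $$ (i,k)" using Tm_sym[where i=i and j=k] by auto
      thus "complex_of_real (?T $$ (i,k) * ?T $$ (k,i)) = complex_of_real ((?T $$ (i,k))^2)"
        by (simp add: power2_eq_square)
    qed
    finally show ?thesis by simp
  qed
  ultimately have s0: "(\<Sum>i<M. \<Sum>k<M. (?T $$ (i,k))^2) = 0" by (metis of_real_eq_0_iff)
  have nn: "\<forall>i\<in>{..<M}. 0 \<le> (\<Sum>k<M. (?T $$ (i,k))^2)" by (simp add: sum_nonneg)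
  have r0: "\<forall>i\<in>{..<M}. (\<Sum>k<M. (?T $$ (i,k))^2) = 0"
    using sum_nonneg_eq_0_iff[of "{..<M}" "\<lambda>i. \<Sum>k<M. (?T $$ (i,k))^2"] s0 nn by simp
  show ?thesis
  proof (intro allI impI)
    fix i j assume i: "i < M" and j: "j < M"
    have "(\<Sum>k<M. (?T $$ (i,k))^2) = 0" using r0 i by simp
    hence "\<forall>k\<in>{..<M}. (?T $$ (i,k))^2 = 0"
      using sum_nonneg_eq_0_iff[of "{..<M}" "\<lambda>k. (?T $$ (i,k))^2"] by simp
    thus "?T $$ (i,j) = 0" using j by simp
  qed
qed

lemma gram_diag:
  assumes g: "g \<in> carrier_mat M M"
    and H: "\<forall>s. singular_value g s \<longleftrightarrow> s = \<sigma>"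
    and i: "i < M" and j: "j < M"
  shows "(\<Sum>k<M. g$$(k,i)*g$$(k,j)) = (if i=j then \<sigma>^2 else 0)"
  using Tm_zero[OF g H] Tm_index[OF i j, of g \<sigma>] i j by auto



lemma sum_split_add: "(\<Sum>c<(n::nat)+(b::nat). f c) = (\<Sum>c<n. f c) + (\<Sum>q<b. (f (n+q) :: 'a::comm_monoid_add))"
  by (induct b) (simp_all add: add.assoc)

lemma sum_pair_index: "(\<Sum>c<(a::nat)*(b::nat). f c) = (\<Sum>p<a. \<Sum>q<b. (f (p*b+q) :: 'a::comm_monoid_add))"
proof (induct a)
  case (Suc a)
  have "(\<Sum>c<Suc a * b. f c) = (\<Sum>c<a*b + b. f c)" by (simp add: add.commute)
  also have "\<dots> = (\<Sum>c<a*b. f c) + (\<Sum>q<b. f (a*b+q))" by (rule sum_split_add)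
  finally show ?case using Suc by simp
qed simp

lemma pq_less: "p < (a::nat) \<Longrightarrow> q < b \<Longrightarrow> p*b+q < a*b"
proof -
  assume p: "p < a" and q: "q < b"
  have "p*b+q < p*b + b" using q by simp
  also have "\<dots> = Suc p * b" by simp
  also have "\<dots> \<le> a * b" using p by (intro mult_le_mono1) simp
  finally show ?thesis .
qed

lemma pq_div[simp]: "q < (b::nat) \<Longrightarrow> (p*b+q) div b = p" by simp
lemma pq_mod[simp]: "q < (b::nat) \<Longrightarrow> (p*b+q) mod b = q" by simp

lemma kron_carrier[simp]: "A \<in> carrier_mat a a' \<Longrightarrow> B \<in> carrier_mat b b' \<Longrightarrow> kron A B \<in> carrier_mat (a*b) (a'*b')"
  by (simp add: kron_def)

lemma kron_index: "A \<in> carrier_mat a a' \<Longrightarrow> B \<in> carrier_mat b b' \<Longrightarrow> i < a*b \<Longrightarrow> j < a'*b' \<Longrightarrow>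
   kron A B $$ (i,j) = A $$ (i div b, j div b') * B $$ (i mod b, j mod b')"
  by (simp add: kron_def)

lemma kron_index2: "A \<in> carrier_mat a a' \<Longrightarrow> B \<in> carrier_mat b b' \<Longrightarrow> p < a \<Longrightarrow> q < b \<Longrightarrow> r < a' \<Longrightarrow> s < b' \<Longrightarrow>
   kron A B $$ (p*b+q, r*b'+s) = A $$ (p, r) * B $$ (q, s)"
  by (simp add: kron_index pq_less)

lemma div_mod_bounds: "i < a * (b::nat) \<Longrightarrow> i div b < a \<and> i mod b < b"
proof -
  assume i: "i < a * b"
  hence "b \<noteq> 0" by (cases b) auto
  thus ?thesis using i by (simp add: less_mult_imp_div_less)
qed

lemma kron_mult:
  assumes A: "A \<in> carrier_mat a a" and C: "C \<in> carrier_mat a a"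
    and B: "B \<in> carrier_mat b b" and D: "D \<in> carrier_mat b b"
  shows "kron A B * kron C D = kron (A * C) (B * D)"
proof (rule eq_matI)
  show "dim_row (kron A B * kron C D) = dim_row (kron (A * C) (B * D))"
    using A B C D by (simp add: kron_def)
  show "dim_col (kron A B * kron C D) = dim_col (kron (A * C) (B * D))"
    using A B C D by (simp add: kron_def)
  fix i j assume "i < dim_row (kron (A * C) (B * D))" "j < dim_col (kron (A * C) (B * D))"
  hence i: "i < a*b" and j: "j < a*b" using A B C D by (auto simp: kron_def)
  from div_mod_bounds[OF i] have i1: "i div b < a" and i2: "i mod b < b" by auto
  from div_mod_bounds[OF j] have j1: "j div b < a" and j2: "j mod b < b" by auto
  have KAB: "kron A B \<in> carrier_mat (a*b) (a*b)" using A B by simp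
  have KCD: "kron C D \<in> carrier_mat (a*b) (a*b)" using C D by simp
  have "(kron A B * kron C D) $$ (i,j) = (\<Sum>c<a*b. kron A B $$ (i,c) * kron C D $$ (c,j))"
    using KAB KCD i j by (simp add: scalar_prod_def lessThan_atLeast0)
  also have "\<dots> = (\<Sum>p<a. \<Sum>q<b. kron A B $$ (i,p*b+q) * kron C D $$ (p*b+q,j))"
    by (rule sum_pair_index)
  also have "\<dots> = (\<Sum>p<a. \<Sum>q<b. (A $$ (i div b, p) * C $$ (p, j div b)) * (B $$ (i mod b, q) * D $$ (q, j mod b)))"
    by (rule sum.cong[OF refl], rule sum.cong[OF refl], insert A B C D i j, auto simp: kron_index pq_less)
  also have "\<dots> = (\<Sum>p<a. A $$ (i div b, p) * C $$ (p, j div b)) * (\<Sum>q<b. B $$ (i mod b, q) * D $$ (q, j mod b))"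
    by (simp add: sum_product)
  also have "\<dots> = (A * C) $$ (i div b, j div b) * (B * D) $$ (i mod b, j mod b)"
    using A B C D i1 i2 j1 j2 by (simp add: scalar_prod_def lessThan_atLeast0)
  also have "\<dots> = kron (A * C) (B * D) $$ (i,j)"
  proof -
    have AC: "A * C \<in> carrier_mat a a" using A C by simp
    have BD: "B * D \<in> carrier_mat b b" using B D by simp
    show ?thesis by (simp add: kron_index[OF AC BD i j])
  qed
  finally show "(kron A B * kron C D) $$ (i,j) = kron (A * C) (B * D) $$ (i,j)" .
qed

lemma kron_one: "kron (1\<^sub>m a) (1\<^sub>m b) = 1\<^sub>m (a*b)"
proof (rule eq_matI)
  fix i j assume "i < dim_row (1\<^sub>m (a*b))" "j < dim_col (1\<^sub>m (a*b))"
  hence i: "i < a*b" and j: "j < a*b" by auto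
  from div_mod_bounds[OF i] have i1: "i div b < a" and i2: "i mod b < b" by auto
  from div_mod_bounds[OF j] have j1: "j div b < a" and j2: "j mod b < b" by auto
  have "(i div b = j div b \<and> i mod b = j mod b) = (i = j)"
  proof
    assume h: "i div b = j div b \<and> i mod b = j mod b"
    have "i = (i div b) * b + i mod b" by simp
    also have "\<dots> = (j div b) * b + j mod b" using h by simp
    also have "\<dots> = j" by simp
    finally show "i = j" .
  qed simp
  thus "kron (1\<^sub>m a) (1\<^sub>m b) $$ (i,j) = 1\<^sub>m (a*b) $$ (i,j)"
    using i j i1 i2 j1 j2 by (auto simp: kron_index[of _ a a _ b b])
qed (auto simp: kron_def)

lemma kron_smult_left: "kron (c \<cdot>\<^sub>m A) B = c \<cdot>\<^sub>m kron A B"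
proof (rule eq_matI)
  fix i j assume "i < dim_row (c \<cdot>\<^sub>m kron A B)" "j < dim_col (c \<cdot>\<^sub>m kron A B)"
  hence i: "i < dim_row A * dim_row B" and j: "j < dim_col A * dim_col B" by (auto simp: kron_def)
  from div_mod_bounds[OF i] div_mod_bounds[OF j]
  show "kron (c \<cdot>\<^sub>m A) B $$ (i, j) = (c \<cdot>\<^sub>m kron A B) $$ (i, j)"
    using i j by (simp add: kron_def)
qed (auto simp: kron_def)

definition hs :: "complex mat \<Rightarrow> complex mat \<Rightarrow> complex" where
  "hs A B = (\<Sum>i<dim_row A. \<Sum>j<dim_col A. A $$ (i,j) * B $$ (i,j))"

lemma kron_hs:
  assumes A: "A \<in> carrier_mat a a" and C: "C \<in> carrier_mat a a"
    and B: "B \<in> carrier_mat b b" and D: "D \<in> carrier_mat b b"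
  shows "hs (kron A B) (kron C D) = hs A C * hs B D"
proof -
  have "hs (kron A B) (kron C D) = (\<Sum>i<a*b. \<Sum>j<a*b. kron A B $$ (i,j) * kron C D $$ (i,j))"
    using A B by (simp add: hs_def kron_def)
  also have "\<dots> = (\<Sum>p<a. \<Sum>q<b. \<Sum>r<a. \<Sum>s<b. kron A B $$ (p*b+q,r*b+s) * kron C D $$ (p*b+q,r*b+s))"
    by (simp add: sum_pair_index)
  also have "\<dots> = (\<Sum>p<a. \<Sum>q<b. \<Sum>r<a. \<Sum>s<b. (A $$ (p,r) * B $$ (q,s)) * (C $$ (p,r) * D $$ (q,s)))"
    by (intro sum.cong refl) (simp add: kron_index2[OF A B] kron_index2[OF C D])
  also have "\<dots> = (\<Sum>p<a. \<Sum>q<b. \<Sum>r<a. \<Sum>s<b. (A $$ (p,r) * C $$ (p,r)) * (B $$ (q,s) * D $$ (q,s)))"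
    by (simp add: ac_simps)
  also have "\<dots> = (\<Sum>p<a. \<Sum>r<a. \<Sum>q<b. \<Sum>s<b. (A $$ (p,r) * C $$ (p,r)) * (B $$ (q,s) * D $$ (q,s)))"
    by (rule sum.cong[OF refl], rule sum.swap)
  also have "\<dots> = (\<Sum>p<a. \<Sum>r<a. (A $$ (p,r) * C $$ (p,r)) * (\<Sum>q<b. \<Sum>s<b. B $$ (q,s) * D $$ (q,s)))"
    by (simp add: sum_distrib_left)
  also have "\<dots> = (\<Sum>p<a. \<Sum>r<a. A $$ (p,r) * C $$ (p,r)) * (\<Sum>q<b. \<Sum>s<b. B $$ (q,s) * D $$ (q,s))"
    by (simp add: sum_distrib_right)
  also have "\<dots> = hs A C * hs B D"
    using A B by (simp add: hs_def)
  finally show ?thesis .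
qed

definition hermc :: "complex mat \<Rightarrow> bool" where
  "hermc A \<longleftrightarrow> (\<forall>i<dim_row A. \<forall>j<dim_col A. A $$ (j,i) = cnj (A $$ (i,j)))"

lemma kron_hermc:
  assumes A: "A \<in> carrier_mat a a" and B: "B \<in> carrier_mat b b"
    and hA: "hermc A" and hB: "hermc B"
  shows "hermc (kron A B)"
  unfolding hermc_def
proof (intro allI impI)
  fix i j assume "i < dim_row (kron A B)" "j < dim_col (kron A B)"
  hence i: "i < a*b" and j: "j < a*b" using A B by (auto simp: kron_def)
  from div_mod_bounds[OF i] have i1: "i div b < a" and i2: "i mod b < b" by auto
  from div_mod_bounds[OF j] have j1: "j div b < a" and j2: "j mod b < b" by auto
  have a1: "A $$ (j div b, i div b) = cnj (A $$ (i div b, j div b))"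
    using A i1 j1 by (intro hA[unfolded hermc_def, rule_format]) auto
  have b1: "B $$ (j mod b, i mod b) = cnj (B $$ (i mod b, j mod b))"
    using B i2 j2 by (intro hB[unfolded hermc_def, rule_format]) auto
  show "kron A B $$ (j,i) = cnj (kron A B $$ (i,j))"
    using A B i j by (simp add: kron_index a1 b1)
qed

definition X2 :: "complex mat" where "X2 = mat 2 2 (\<lambda>(i,j). if i \<noteq> j then 1 else 0)"
definition Z2 :: "complex mat" where "Z2 = mat 2 2 (\<lambda>(i,j). if i = j then (if i = 0 then 1 else -1) else 0)"

lemma X2_carrier[simp]: "X2 \<in> carrier_mat 2 2" by (simp add: X2_def)
lemma Z2_carrier[simp]: "Z2 \<in> carrier_mat 2 2" by (simp add: Z2_def)

lemma less2: "(i::nat) < 2 \<longleftrightarrow> i = 0 \<or> i = 1" by auto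
lemma sum2: "(\<Sum>i<(2::nat). f i) = f 0 + (f 1 :: 'a::comm_monoid_add)" by (simp add: numeral_2_eq_2)

lemma XX: "X2 * X2 = 1\<^sub>m 2"
proof (rule eq_matI)
  fix i j assume "i < dim_row (1\<^sub>m 2)" "j < dim_col (1\<^sub>m 2)"
  hence "i = 0 \<or> i = 1" "j = 0 \<or> j = 1" by (auto simp: X2_def)
  thus "(X2 * X2) $$ (i,j) = (1\<^sub>m 2) $$ (i,j)"
    by (elim disjE) (simp_all add: X2_def scalar_prod_def atLeast0LessThan sum2)
qed (simp_all add: X2_def)
lemma ZZ: "Z2 * Z2 = 1\<^sub>m 2"
proof (rule eq_matI)
  fix i j assume "i < dim_row (1\<^sub>m 2)" "j < dim_col (1\<^sub>m 2)"
  hence "i = 0 \<or> i = 1" "j = 0 \<or> j = 1" by (auto simp: Z2_def)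
  thus "(Z2 * Z2) $$ (i,j) = (1\<^sub>m 2) $$ (i,j)"
    by (elim disjE) (simp_all add: Z2_def scalar_prod_def atLeast0LessThan sum2)
qed (simp_all add: Z2_def)
lemma XZ: "X2 * Z2 = (-1) \<cdot>\<^sub>m (Z2 * X2)"
proof (rule eq_matI)
  fix i j assume "i < dim_row ((-1) \<cdot>\<^sub>m (Z2 * X2))" "j < dim_col ((-1) \<cdot>\<^sub>m (Z2 * X2))"
  hence "i = 0 \<or> i = 1" "j = 0 \<or> j = 1" by (auto simp: X2_def Z2_def)
  thus "(X2 * Z2) $$ (i,j) = ((-1) \<cdot>\<^sub>m (Z2 * X2)) $$ (i,j)"
    by (elim disjE) (simp_all add: X2_def Z2_def scalar_prod_def atLeast0LessThan sum2)
qed (simp_all add: X2_def Z2_def)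
lemma ZX: "Z2 * X2 = (-1) \<cdot>\<^sub>m (X2 * Z2)"
proof (rule eq_matI)
  fix i j assume "i < dim_row ((-1) \<cdot>\<^sub>m (X2 * Z2))" "j < dim_col ((-1) \<cdot>\<^sub>m (X2 * Z2))"
  hence "i = 0 \<or> i = 1" "j = 0 \<or> j = 1" by (auto simp: X2_def Z2_def)
  thus "(Z2 * X2) $$ (i,j) = ((-1) \<cdot>\<^sub>m (X2 * Z2)) $$ (i,j)"
    by (elim disjE) (simp_all add: X2_def Z2_def scalar_prod_def atLeast0LessThan sum2)
qed (simp_all add: X2_def Z2_def)
lemma hsZZ: "hs Z2 Z2 = 2" by (simp add: hs_def Z2_def sum2)
lemma hsXX: "hs X2 X2 = 2" by (simp add: hs_def X2_def sum2)
lemma hsZX: "hs Z2 X2 = 0" by (simp add: hs_def X2_def Z2_def sum2)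
lemma hsXZ: "hs X2 Z2 = 0" by (simp add: hs_def X2_def Z2_def sum2)
lemma hs_one: "hs (1\<^sub>m n) (1\<^sub>m n) = of_nat n"
proof -
  have "hs (1\<^sub>m n) (1\<^sub>m n) = (\<Sum>i<n. \<Sum>j<n. (if i = j then 1 else 0) * (if i = j then 1 else 0))"
    by (simp add: hs_def)
  also have "\<dots> = (\<Sum>i<n. \<Sum>j<n. if i = j then 1 else 0)"
    by (intro sum.cong refl) simp
  also have "\<dots> = (\<Sum>i<n. 1)" by (simp add: sum.delta sum.delta')
  finally show ?thesis by simp
qed
lemma herm_X2: "hermc X2" by (auto simp: hermc_def X2_def less2)
lemma herm_Z2: "hermc Z2" by (auto simp: hermc_def Z2_def less2)
lemma herm_one: "hermc (1\<^sub>m n)" by (auto simp: hermc_def)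



lemma kron_smult_right: "kron A (c \<cdot>\<^sub>m B) = c \<cdot>\<^sub>m kron A B"
proof (rule eq_matI)
  fix i j assume "i < dim_row (c \<cdot>\<^sub>m kron A B)" "j < dim_col (c \<cdot>\<^sub>m kron A B)"
  hence i: "i < dim_row A * dim_row B" and j: "j < dim_col A * dim_col B" by (auto simp: kron_def)
  from div_mod_bounds[OF i] div_mod_bounds[OF j]
  show "kron A (c \<cdot>\<^sub>m B) $$ (i, j) = (c \<cdot>\<^sub>m kron A B) $$ (i, j)"
    using i j by (simp add: kron_def)
qed (auto simp: kron_def)

fun Gam :: "nat \<Rightarrow> nat \<Rightarrow> complex mat" where
  "Gam 0 k = 1\<^sub>m 1"
| "Gam (Suc m) k = (if k < m then kron Z2 (Gam m k) else kron X2 (1\<^sub>m (2^m)))"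

lemma Gam_carrier[simp]: "Gam m k \<in> carrier_mat (2^m) (2^m)"
  by (induct m) auto

lemma Gam_herm: "hermc (Gam m k)"
proof (induct m)
  case 0 show ?case by (simp add: herm_one)
next
  case (Suc m)
  show ?case
    using kron_hermc[OF Z2_carrier Gam_carrier herm_Z2 Suc]
      kron_hermc[OF X2_carrier one_carrier_mat herm_X2 herm_one, of "2^m"]
    by (simp add: herm_Z2 herm_X2)
qed

lemma Gam_sq: "k < m \<Longrightarrow> Gam m k * Gam m k = 1\<^sub>m (2^m)"
proof (induct m)
  case 0 thus ?case by simp
next
  case (Suc m)
  show ?case
  proof (cases "k < m")
    case True
    have "Gam (Suc m) k * Gam (Suc m) k = kron (Z2 * Z2) (Gam m k * Gam m k)"
      using True by (simp add: kron_mult[OF Z2_carrier Z2_carrier Gam_carrier Gam_carrier])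
    also have "\<dots> = 1\<^sub>m (2^Suc m)" using True Suc by (simp add: ZZ kron_one)
    finally show ?thesis .
  next
    case False
    have "Gam (Suc m) k * Gam (Suc m) k = kron (X2 * X2) (1\<^sub>m (2^m) * 1\<^sub>m (2^m))"
      using False by (simp add: kron_mult[OF X2_carrier X2_carrier one_carrier_mat one_carrier_mat])
    also have "\<dots> = 1\<^sub>m (2^Suc m)" by (simp add: XX kron_one)
    finally show ?thesis .
  qed
qed

lemma Gam_anti: "k < m \<Longrightarrow> l < m \<Longrightarrow> k \<noteq> l \<Longrightarrow> Gam m k * Gam m l = (-1) \<cdot>\<^sub>m (Gam m l * Gam m k)"
proof (induct m)
  case 0 thus ?case by simp
next
  case (Suc m)
  note kmZ = kron_mult[OF Z2_carrier Z2_carrier Gam_carrier Gam_carrier]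
  note kmZX = kron_mult[OF Z2_carrier X2_carrier Gam_carrier one_carrier_mat]
  note kmXZ = kron_mult[OF X2_carrier Z2_carrier one_carrier_mat Gam_carrier]
  show ?case
  proof (cases "k < m")
    case k: True
    show ?thesis
    proof (cases "l < m")
      case l: True
      have "Gam (Suc m) k * Gam (Suc m) l = kron (Z2 * Z2) (Gam m k * Gam m l)"
        using k l by (simp add: kmZ)
      also have "\<dots> = kron (Z2 * Z2) ((-1) \<cdot>\<^sub>m (Gam m l * Gam m k))" using Suc k l by simp
      also have "\<dots> = (-1) \<cdot>\<^sub>m kron (Z2 * Z2) (Gam m l * Gam m k)" by (rule kron_smult_right)
      also have "\<dots> = (-1) \<cdot>\<^sub>m (Gam (Suc m) l * Gam (Suc m) k)" using k l by (simp add: kmZ)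
      finally show ?thesis .
    next
      case l: False
      have "Gam (Suc m) k * Gam (Suc m) l = kron (Z2 * X2) (Gam m k * 1\<^sub>m (2^m))"
        using k l by (simp add: kmZX)
      also have "\<dots> = kron ((-1) \<cdot>\<^sub>m (X2 * Z2)) (1\<^sub>m (2^m) * Gam m k)"
        by (simp add: ZX right_mult_one_mat[OF Gam_carrier] left_mult_one_mat[OF Gam_carrier])
      also have "\<dots> = (-1) \<cdot>\<^sub>m kron (X2 * Z2) (1\<^sub>m (2^m) * Gam m k)" by (rule kron_smult_left)
      also have "\<dots> = (-1) \<cdot>\<^sub>m (Gam (Suc m) l * Gam (Suc m) k)" using k l by (simp add: kmXZ)
      finally show ?thesis .
    qed
  next
    case k: False
    hence l: "l < m" using Suc by auto
    have "Gam (Suc m) k * Gam (Suc m) l = kron (X2 * Z2) (1\<^sub>m (2^m) * Gam m l)"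
      using k l by (simp add: kmXZ)
    also have "\<dots> = kron ((-1) \<cdot>\<^sub>m (Z2 * X2)) (Gam m l * 1\<^sub>m (2^m))"
      by (simp add: XZ right_mult_one_mat[OF Gam_carrier] left_mult_one_mat[OF Gam_carrier])
    also have "\<dots> = (-1) \<cdot>\<^sub>m kron (Z2 * X2) (Gam m l * 1\<^sub>m (2^m))" by (rule kron_smult_left)
    also have "\<dots> = (-1) \<cdot>\<^sub>m (Gam (Suc m) l * Gam (Suc m) k)" using k l by (simp add: kmZX)
    finally show ?thesis .
  qed
qed

lemma Gam_hs: "k < m \<Longrightarrow> l < m \<Longrightarrow> hs (Gam m k) (Gam m l) = (if k = l then 2^m else 0)"
proof (induct m)
  case 0 thus ?case by simp
next
  case (Suc m)
  note hZ = kron_hs[OF Z2_carrier Z2_carrier Gam_carrier Gam_carrier]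
  note hZX = kron_hs[OF Z2_carrier X2_carrier Gam_carrier one_carrier_mat]
  note hXZ = kron_hs[OF X2_carrier Z2_carrier one_carrier_mat Gam_carrier]
  note hX = kron_hs[OF X2_carrier X2_carrier one_carrier_mat one_carrier_mat]
  show ?case
  proof (cases "k < m")
    case k: True
    show ?thesis
    proof (cases "l < m")
      case l: True
      thus ?thesis using k Suc by (simp add: hZ hsZZ)
    next
      case l: False
      thus ?thesis using k by (simp add: hZX hsZX)
    qed
  next
    case k: False
    show ?thesis
    proof (cases "l < m")
      case l: True
      thus ?thesis using k by (simp add: hXZ hsXZ)
    next
      case l: False
      hence "k = l" using k Suc by auto
      thus ?thesis using k l by (simp add: hX hsXX hs_one)
    qed
  qed
qed



lemma nonzero_comp: "v \<in> carrier_vec n \<Longrightarrow> v \<noteq> 0\<^sub>v n \<Longrightarrow> \<exists>i<n. v$i \<noteq> 0"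
proof (rule ccontr)
  assume v: "v \<in> carrier_vec n" "v \<noteq> 0\<^sub>v n" and "\<not> (\<exists>i<n. v $ i \<noteq> 0)"
  hence "v = 0\<^sub>v n" by (intro eq_vecI) auto
  with v show False by simp
qed

lemma eig_invol:
  assumes A: "A \<in> carrier_mat n n" and AA: "A * A = 1\<^sub>m n" and ev: "eigenvalue A (k::complex)"
  shows "k = 1 \<or> k = -1"
proof -
  from ev A obtain v where v: "v \<in> carrier_vec n" "v \<noteq> 0\<^sub>v n" and Av: "A *\<^sub>v v = k \<cdot>\<^sub>v v"
    unfolding eigenvalue_def eigenvector_def by auto
  have "v = (A * A) *\<^sub>v v" using AA v by simp
  also have "\<dots> = A *\<^sub>v (A *\<^sub>v v)" by (rule assoc_mult_mat_vec[OF A A v(1)])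
  also have "\<dots> = k \<cdot>\<^sub>v (A *\<^sub>v v)" using A v by (simp add: mult_mat_vec Av)
  also have "\<dots> = k \<cdot>\<^sub>v (k \<cdot>\<^sub>v v)" unfolding Av by (rule refl)
  finally have e: "v = k \<cdot>\<^sub>v (k \<cdot>\<^sub>v v)" .
  obtain i where i: "i < n" "v $ i \<noteq> 0" using nonzero_comp[OF v] by blast
  have "v $ i = k * (k * v $ i)" using arg_cong[OF e, of "\<lambda>w. w $ i"] i v by simp
  hence "(k * k) * v $ i = 1 * v $ i" by (simp add: mult.assoc)
  hence "k * k = 1" using i(2) mult_cancel_right[of "k*k" "v$i" 1] by simp
  thus ?thesis by (simp add: square_eq_1_iff)
qed

lemma eig_idem:
  assumes A: "A \<in> carrier_mat n n" and AA: "A * A = A" and ev: "eigenvalue A (k::complex)"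
  shows "k = 0 \<or> k = 1"
proof -
  from ev A obtain v where v: "v \<in> carrier_vec n" "v \<noteq> 0\<^sub>v n" and Av: "A *\<^sub>v v = k \<cdot>\<^sub>v v"
    unfolding eigenvalue_def eigenvector_def by auto
  have "k \<cdot>\<^sub>v v = (A * A) *\<^sub>v v" using AA Av by simp
  also have "\<dots> = A *\<^sub>v (A *\<^sub>v v)" by (rule assoc_mult_mat_vec[OF A A v(1)])
  also have "\<dots> = k \<cdot>\<^sub>v (A *\<^sub>v v)" using A v by (simp add: mult_mat_vec Av)
  also have "\<dots> = k \<cdot>\<^sub>v (k \<cdot>\<^sub>v v)" unfolding Av by (rule refl)
  finally have e: "k \<cdot>\<^sub>v v = k \<cdot>\<^sub>v (k \<cdot>\<^sub>v v)" .
  obtain i where i: "i < n" "v $ i \<noteq> 0" using nonzero_comp[OF v] by blast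
  have "k * v $ i = k * (k * v $ i)" using arg_cong[OF e, of "\<lambda>w. w $ i"] i v by simp
  hence "(k * k) * v $ i = k * v $ i" by (simp add: mult.assoc)
  hence "k * k = k" using i(2) mult_cancel_right[of "k*k" "v$i" k] by simp
  hence "k * (k - 1) = 0" by (simp add: algebra_simps)
  thus ?thesis by simp
qed

lemma obs_of_invol:
  assumes A: "A \<in> carrier_mat n n" and h: "\<forall>i<n. \<forall>j<n. A $$ (j,i) = cnj (A $$ (i,j))"
    and AA: "A * A = 1\<^sub>m n"
  shows "observable n A"
proof -
  have "herm n A" unfolding herm_def using A h by blast
  moreover have "Im k = 0 \<and> -1 \<le> Re k \<and> Re k \<le> 1" if "eigenvalue A k" for k
  proof -
    from eig_invol[OF A AA that] have "k = 1 \<or> k = -1" .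
    thus ?thesis by auto
  qed
  ultimately show ?thesis unfolding observable_def by blast
qed

definition rhoD :: "nat \<Rightarrow> complex mat" where
  "rhoD D = mat (D*D) (D*D) (\<lambda>(a,b). if a div D = a mod D \<and> b div D = b mod D then 1 / of_nat D else 0)"

lemma rhoD_carrier[simp]: "rhoD D \<in> carrier_mat (D*D) (D*D)" by (simp add: rhoD_def)
lemma rhoD_dim[simp]: "dim_row (rhoD D) = D*D" "dim_col (rhoD D) = D*D" by (simp_all add: rhoD_def)

lemma rhoD_idx: "i < D*D \<Longrightarrow> j < D*D \<Longrightarrow> rhoD D $$ (i,j) = (if i div D = i mod D \<and> j div D = j mod D then 1 / of_nat D else 0)"
  by (simp add: rhoD_def)

lemma rhoD_sq:
  assumes D: "0 < D"
  shows "rhoD D * rhoD D = rhoD D"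
proof (rule eq_matI)
  fix i j assume "i < dim_row (rhoD D)" "j < dim_col (rhoD D)"
  hence i: "i < D*D" and j: "j < D*D" by (auto simp: rhoD_def)
  let ?c = "if i div D = i mod D \<and> j div D = j mod D then 1 / of_nat D * (1 / of_nat D) else (0::complex)"
  have "(rhoD D * rhoD D) $$ (i,j) = (\<Sum>c<D*D. rhoD D $$ (i,c) * rhoD D $$ (c,j))"
    using i j by (simp add: scalar_prod_def lessThan_atLeast0)
  also have "\<dots> = (\<Sum>p<D. \<Sum>q<D. rhoD D $$ (i,p*D+q) * rhoD D $$ (p*D+q,j))"
    by (rule sum_pair_index)
  also have "\<dots> = (\<Sum>p<D. \<Sum>q<D. if q = p then ?c else 0)"
    by (intro sum.cong refl) (auto simp: rhoD_idx i j pq_less)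
  also have "\<dots> = (\<Sum>p<D. ?c)" by simp
  also have "\<dots> = (if i div D = i mod D \<and> j div D = j mod D then 1 / of_nat D else 0)"
    using D by simp
  also have "\<dots> = rhoD D $$ (i,j)" using i j by (simp add: rhoD_idx)
  finally show "(rhoD D * rhoD D) $$ (i,j) = rhoD D $$ (i,j)" .
qed (auto simp: rhoD_def)

lemma rhoD_trace:
  assumes D: "0 < D"
  shows "mtrace (rhoD D) = 1"
proof -
  have "mtrace (rhoD D) = (\<Sum>c<D*D. rhoD D $$ (c,c))" by (simp add: mtrace_def rhoD_def)
  also have "\<dots> = (\<Sum>p<D. \<Sum>q<D. rhoD D $$ (p*D+q,p*D+q))" by (rule sum_pair_index)
  also have "\<dots> = (\<Sum>p<D. \<Sum>q<D. if q = p then 1 / of_nat D else 0)"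
    by (intro sum.cong refl) (auto simp: rhoD_idx pq_less)
  also have "\<dots> = 1" using D by simp
  finally show ?thesis .
qed

lemma rhoD_density:
  assumes D: "0 < D"
  shows "density (D*D) (rhoD D)"
  unfolding density_def herm_def
proof (intro conjI allI impI)
  fix k assume "eigenvalue (rhoD D) k"
  from eig_idem[OF rhoD_carrier rhoD_sq[OF D] this] have "k = 0 \<or> k = 1" .
  thus "Im k = 0" "0 \<le> Re k" by auto
next
  show "mtrace (rhoD D) = 1" by (rule rhoD_trace[OF D])
qed (auto simp: rhoD_idx)

lemma mtrace_rho_kron:
  assumes A: "A \<in> carrier_mat D D" and B: "B \<in> carrier_mat D D"
  shows "mtrace (rhoD D * kron A B) = hs A B / of_nat D"
proof -
  let ?K = "kron A B"
  have K: "?K \<in> carrier_mat (D*D) (D*D)" using A B by simp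
  let ?c = "1 / (of_nat D :: complex)"
  have "mtrace (rhoD D * ?K) = (\<Sum>i<D*D. \<Sum>c<D*D. rhoD D $$ (i,c) * ?K $$ (c,i))"
    using K by (simp add: mtrace_def scalar_prod_def lessThan_atLeast0)
  also have "\<dots> = (\<Sum>p<D. \<Sum>q<D. \<Sum>c<D*D. rhoD D $$ (p*D+q,c) * ?K $$ (c,p*D+q))"
    by (rule sum_pair_index)
  also have "\<dots> = (\<Sum>p<D. \<Sum>q<D. \<Sum>r<D. \<Sum>s<D. rhoD D $$ (p*D+q,r*D+s) * ?K $$ (r*D+s,p*D+q))"
    by (simp only: sum_pair_index)
  also have "\<dots> = (\<Sum>p<D. \<Sum>q<D. \<Sum>r<D. \<Sum>s<D. if s = r then (if q = p then ?c * (A $$ (r,p) * B $$ (s,q)) else 0) else 0)"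
    by (intro sum.cong refl) (auto simp: rhoD_idx pq_less kron_index2[OF A B])
  also have "\<dots> = (\<Sum>p<D. \<Sum>q<D. \<Sum>r<D. if q = p then ?c * (A $$ (r,p) * B $$ (r,q)) else 0)"
    by simp
  also have "\<dots> = (\<Sum>p<D. \<Sum>r<D. \<Sum>q<D. if q = p then ?c * (A $$ (r,p) * B $$ (r,q)) else 0)"
    by (rule sum.cong[OF refl], rule sum.swap)
  also have "\<dots> = (\<Sum>p<D. \<Sum>r<D. ?c * (A $$ (r,p) * B $$ (r,p)))"
    by simp
  also have "\<dots> = ?c * (\<Sum>r<D. \<Sum>p<D. A $$ (r,p) * B $$ (r,p))"
    by (subst sum.swap) (simp add: sum_distrib_left)
  also have "\<dots> = hs A B / of_nat D" using A by (simp add: hs_def)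
  finally show ?thesis .
qed



definition A2m :: "real mat \<Rightarrow> nat \<Rightarrow> real \<Rightarrow> nat \<Rightarrow> complex mat" where
  "A2m g M \<sigma> y = mat (2^M) (2^M) (\<lambda>(i,j). \<Sum>x<M. complex_of_real (g$$(x,y)/\<sigma>) * Gam M x $$ (i,j))"

lemma A2m_carrier[simp]: "A2m g M \<sigma> y \<in> carrier_mat (2^M) (2^M)" by (simp add: A2m_def)
lemma A2m_dim[simp]: "dim_row (A2m g M \<sigma> y) = 2^M" "dim_col (A2m g M \<sigma> y) = 2^M" by (simp_all add: A2m_def)

lemma Gam_dim[simp]: "dim_row (Gam m k) = 2^m" "dim_col (Gam m k) = 2^m"
  using carrier_matD[OF Gam_carrier[of m k]] by auto

lemma Gam_herm': "i < 2^m \<Longrightarrow> j < 2^m \<Longrightarrow> Gam m k $$ (j,i) = cnj (Gam m k $$ (i,j))"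
  using Gam_herm[of m k] Gam_carrier[of m k] unfolding hermc_def by (intro Gam_herm[of m k, unfolded hermc_def, rule_format]) auto

lemma A2m_herm: "i < 2^M \<Longrightarrow> j < 2^M \<Longrightarrow> A2m g M \<sigma> y $$ (j,i) = cnj (A2m g M \<sigma> y $$ (i,j))"
proof -
  assume i: "i < 2^M" and j: "j < 2^M"
  have "A2m g M \<sigma> y $$ (j,i) = (\<Sum>x<M. complex_of_real (g$$(x,y)/\<sigma>) * Gam M x $$ (j,i))"
    using i j by (simp add: A2m_def)
  also have "\<dots> = (\<Sum>x<M. complex_of_real (g$$(x,y)/\<sigma>) * cnj (Gam M x $$ (i,j)))"
    by (intro sum.cong refl) (simp add: Gam_herm'[OF i j])
  also have "\<dots> = cnj (A2m g M \<sigma> y $$ (i,j))"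
    using i j by (simp add: A2m_def cnj_sum)
  finally show ?thesis .
qed

lemma Gam_entry_sq: "x < m \<Longrightarrow> i < 2^m \<Longrightarrow> j < 2^m \<Longrightarrow> (\<Sum>k<2^m. Gam m x $$ (i,k) * Gam m x $$ (k,j)) = (if i = j then 1 else 0)"
proof -
  assume x: "x < m" and i: "i < 2^m" and j: "j < 2^m"
  have "(Gam m x * Gam m x) $$ (i,j) = (\<Sum>k<2^m. Gam m x $$ (i,k) * Gam m x $$ (k,j))"
    using i j by (simp add: scalar_prod_def lessThan_atLeast0)
  thus ?thesis using Gam_sq[OF x] i j by simp
qed

lemma Gam_entry_anti: "x < m \<Longrightarrow> x' < m \<Longrightarrow> x \<noteq> x' \<Longrightarrow> i < 2^m \<Longrightarrow> j < 2^m \<Longrightarrow>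
   (\<Sum>k<2^m. Gam m x $$ (i,k) * Gam m x' $$ (k,j)) = - (\<Sum>k<2^m. Gam m x' $$ (i,k) * Gam m x $$ (k,j))"
proof -
  assume x: "x < m" and x': "x' < m" and d: "x \<noteq> x'" and i: "i < 2^m" and j: "j < 2^m"
  have "(Gam m x * Gam m x') $$ (i,j) = (\<Sum>k<2^m. Gam m x $$ (i,k) * Gam m x' $$ (k,j))"
    using i j by (simp add: scalar_prod_def lessThan_atLeast0)
  moreover have "(Gam m x' * Gam m x) $$ (i,j) = (\<Sum>k<2^m. Gam m x' $$ (i,k) * Gam m x $$ (k,j))"
    using i j by (simp add: scalar_prod_def lessThan_atLeast0)
  moreover have "(Gam m x * Gam m x') $$ (i,j) = - ((Gam m x' * Gam m x) $$ (i,j))"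
    using Gam_anti[OF x x' d] i j by simp
  ultimately show ?thesis by simp
qed

lemma A2m_sq:
  assumes gr: "(\<Sum>x<M. g$$(x,y) * g$$(x,y)) = \<sigma>^2" and s: "\<sigma> \<noteq> 0"
  shows "A2m g M \<sigma> y * A2m g M \<sigma> y = 1\<^sub>m (2^M)"
proof (rule eq_matI)
  fix i j assume "i < dim_row (1\<^sub>m (2^M))" "j < dim_col (1\<^sub>m (2^M))"
  hence i: "i < 2^M" and j: "j < 2^M" by auto
  define c where "c x = complex_of_real (g$$(x,y)/\<sigma>)" for x
  define P where "P x x' = (\<Sum>k<2^M. Gam M x $$ (i,k) * Gam M x' $$ (k,j))" for x x'
  define d where "d = (if i = j then 1 else (0::complex))"
  have "(A2m g M \<sigma> y * A2m g M \<sigma> y) $$ (i,j) = (\<Sum>k<2^M. A2m g M \<sigma> y $$ (i,k) * A2m g M \<sigma> y $$ (k,j))"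
    using i j by (simp add: scalar_prod_def lessThan_atLeast0)
  also have "\<dots> = (\<Sum>k<2^M. (\<Sum>x<M. c x * Gam M x $$ (i,k)) * (\<Sum>x'<M. c x' * Gam M x' $$ (k,j)))"
    by (intro sum.cong refl) (simp add: A2m_def c_def i j)
  also have "\<dots> = (\<Sum>k<2^M. \<Sum>x<M. \<Sum>x'<M. (c x * c x') * (Gam M x $$ (i,k) * Gam M x' $$ (k,j)))"
    unfolding sum_product by (intro sum.cong refl) (simp add: mult_ac)
  also have "\<dots> = (\<Sum>x<M. \<Sum>k<2^M. \<Sum>x'<M. (c x * c x') * (Gam M x $$ (i,k) * Gam M x' $$ (k,j)))"
    by (rule sum.swap)
  also have "\<dots> = (\<Sum>x<M. \<Sum>x'<M. \<Sum>k<2^M. (c x * c x') * (Gam M x $$ (i,k) * Gam M x' $$ (k,j)))"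
    by (rule sum.cong[OF refl], rule sum.swap)
  also have "\<dots> = (\<Sum>x<M. \<Sum>x'<M. (c x * c x') * P x x')"
    by (simp add: P_def sum_distrib_left)
  finally have S: "(A2m g M \<sigma> y * A2m g M \<sigma> y) $$ (i,j) = (\<Sum>x<M. \<Sum>x'<M. (c x * c x') * P x x')" .
  define S where "S = (\<Sum>x<M. \<Sum>x'<M. (c x * c x') * P x x')"
  have S2: "S = (\<Sum>x<M. \<Sum>x'<M. (c x * c x') * P x' x)"
    unfolding S_def by (subst sum.swap) (simp add: mult.commute)
  have "S + S = S + (\<Sum>x<M. \<Sum>x'<M. (c x * c x') * P x' x)" using S2 by simp
  also have "\<dots> = (\<Sum>x<M. \<Sum>x'<M. (c x * c x') * (P x x' + P x' x))"
    unfolding S_def by (simp add: distrib_left sum.distrib)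
  also have "\<dots> = (\<Sum>x<M. \<Sum>x'<M. if x' = x then 2 * d * (c x * c x) else 0)"
  proof (intro sum.cong refl)
    fix x x' assume "x \<in> {..<M}" "x' \<in> {..<M}"
    hence x: "x < M" and x': "x' < M" by auto
    show "(c x * c x') * (P x x' + P x' x) = (if x' = x then 2 * d * (c x * c x) else 0)"
    proof (cases "x' = x")
      case True
      thus ?thesis unfolding P_def d_def using Gam_entry_sq[OF x i j] by simp
    next
      case False
      hence "x \<noteq> x'" by simp
      thus ?thesis unfolding P_def using Gam_entry_anti[OF x x' _ i j] False by simp
    qed
  qed
  also have "\<dots> = 2 * d * (\<Sum>x<M. c x * c x)" by (simp add: sum_distrib_left)
  also have "(\<Sum>x<M. c x * c x) = 1"
  proof -
    have "(\<Sum>x<M. c x * c x) = complex_of_real (\<Sum>x<M. g$$(x,y) * g$$(x,y) / \<sigma>^2)"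
      by (simp add: c_def power2_eq_square)
    also have "(\<Sum>x<M. g$$(x,y) * g$$(x,y) / \<sigma>^2) = (\<Sum>x<M. g$$(x,y) * g$$(x,y)) / \<sigma>^2"
      by (simp add: sum_divide_distrib)
    also have "\<dots> = 1" using gr s by simp
    finally show ?thesis by simp
  qed
  finally have "S = d" by simp
  thus "(A2m g M \<sigma> y * A2m g M \<sigma> y) $$ (i,j) = 1\<^sub>m (2^M) $$ (i,j)"
    using S i j unfolding S_def d_def by simp
qed simp_all

lemma hs_A2m: "x1 < M \<Longrightarrow> hs (Gam M x1) (A2m g M \<sigma> y) = of_nat (2^M) * complex_of_real (g$$(x1,y)/\<sigma>)"
proof -
  assume x1: "x1 < M"
  define c where "c x = complex_of_real (g$$(x,y)/\<sigma>)" for x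
  have "hs (Gam M x1) (A2m g M \<sigma> y) = (\<Sum>i<2^M. \<Sum>j<2^M. Gam M x1 $$ (i,j) * (\<Sum>x<M. c x * Gam M x $$ (i,j)))"
    unfolding hs_def by (intro sum.cong) (auto simp: A2m_def c_def)
  also have "\<dots> = (\<Sum>i<2^M. \<Sum>j<2^M. \<Sum>x<M. c x * (Gam M x1 $$ (i,j) * Gam M x $$ (i,j)))"
    by (simp add: sum_distrib_left mult_ac)
  also have "\<dots> = (\<Sum>i<2^M. \<Sum>x<M. \<Sum>j<2^M. c x * (Gam M x1 $$ (i,j) * Gam M x $$ (i,j)))"
    by (rule sum.cong[OF refl], rule sum.swap)
  also have "\<dots> = (\<Sum>x<M. \<Sum>i<2^M. \<Sum>j<2^M. c x * (Gam M x1 $$ (i,j) * Gam M x $$ (i,j)))"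
    by (rule sum.swap)
  also have "\<dots> = (\<Sum>x<M. c x * hs (Gam M x1) (Gam M x))"
    by (simp add: hs_def sum_distrib_left)
  also have "\<dots> = (\<Sum>x<M. if x = x1 then c x * 2^M else 0)"
    by (intro sum.cong refl) (auto simp: Gam_hs x1)
  also have "\<dots> = of_nat (2^M) * c x1" using x1 by simp
  finally show ?thesis by (simp add: c_def)
qed



theorem corollary2:
  fixes g :: "real mat" and M :: nat
  assumes "g \<in> carrier_mat M M"
    and "g \<noteq> 0\<^sub>m M M"
    and "\<exists>\<sigma>. \<forall>s. singular_value g s \<longleftrightarrow> s = \<sigma>"
  shows "\<exists>(d1::nat) (d2::nat) (\<rho>::complex mat) (A1::nat \<Rightarrow> complex mat) (A2::nat \<Rightarrow> complex mat).
           0 < d1 \<and> 0 < d2 \<and> density (d1 * d2) \<rho> \<and>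
           (\<forall>x<M. observable d1 (A1 x)) \<and> (\<forall>x<M. observable d2 (A2 x)) \<and>
           (\<Sum>x1<M. \<Sum>x2<M. complex_of_real (g $$ (x1, x2)) * mtrace (\<rho> * kron (A1 x1) (A2 x2)))
             = complex_of_real (real M * norm2 g)"
proof -
  obtain \<sigma> where H: "\<forall>s. singular_value g s \<longleftrightarrow> s = \<sigma>" using assms(3) by blast
  have "{s. singular_value g s} = {\<sigma>}" using H by auto
  hence n2: "norm2 g = \<sigma>" by (simp add: norm2_def)
  have gr: "(\<Sum>k<M. g$$(k,i)*g$$(k,j)) = (if i=j then \<sigma>^2 else 0)" if "i < M" "j < M" for i j
    by (rule gram_diag[OF assms(1) H that])
  have grd: "(\<Sum>k<M. g$$(k,j)*g$$(k,j)) = \<sigma>^2" if "j < M" for j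
    using gr[OF that that] by simp
  have sne: "\<sigma> \<noteq> 0"
  proof
    assume s0: "\<sigma> = 0"
    have "g = 0\<^sub>m M M"
    proof (rule eq_matI)
      fix i j assume "i < dim_row (0\<^sub>m M M)" "j < dim_col (0\<^sub>m M M)"
      hence i: "i < M" and j: "j < M" by auto
      have "(\<Sum>k<M. g$$(k,j)*g$$(k,j)) = 0" using grd[OF j] s0 by simp
      hence "\<forall>k\<in>{..<M}. g$$(k,j)*g$$(k,j) = 0"
        using sum_nonneg_eq_0_iff[of "{..<M}" "\<lambda>k. g$$(k,j)*g$$(k,j)"] by simp
      hence "g$$(i,j)*g$$(i,j) = 0" using i by simp
      thus "g $$ (i,j) = 0\<^sub>m M M $$ (i,j)" using i j by simp
    qed (use assms(1) in auto)
    with assms(2) show False by simp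
  qed
  define D where "D = (2::nat)^M"
  have D: "0 < D" by (simp add: D_def)
  have c1: "density (D * D) (rhoD D)" by (rule rhoD_density[OF D])
  have c2: "\<forall>x<M. observable D (Gam M x)"
    unfolding D_def by (intro allI impI obs_of_invol[OF Gam_carrier] Gam_sq Gam_herm')
  have c3: "\<forall>x<M. observable D (A2m g M \<sigma> x)"
    unfolding D_def by (intro allI impI obs_of_invol[OF A2m_carrier] A2m_sq[OF grd sne] A2m_herm)
  have tm: "complex_of_real (g $$ (x1, x2)) * mtrace (rhoD D * kron (Gam M x1) (A2m g M \<sigma> x2))
     = complex_of_real (g $$ (x1, x2) * (g $$ (x1, x2) / \<sigma>))" if x1: "x1 < M" for x1 x2
  proof -
    have "mtrace (rhoD D * kron (Gam M x1) (A2m g M \<sigma> x2)) = hs (Gam M x1) (A2m g M \<sigma> x2) / of_nat D"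
      unfolding D_def by (rule mtrace_rho_kron) simp_all
    also have "\<dots> = complex_of_real (g $$ (x1, x2) / \<sigma>)"
      using D unfolding D_def by (simp add: hs_A2m[OF x1])
    finally show ?thesis by simp
  qed
  have r: "(\<Sum>x1<M. \<Sum>x2<M. g$$(x1,x2)*(g$$(x1,x2)/\<sigma>)) = real M * \<sigma>"
  proof -
    have "(\<Sum>x1<M. \<Sum>x2<M. g$$(x1,x2)*(g$$(x1,x2)/\<sigma>)) = (\<Sum>x2<M. (\<Sum>x1<M. g$$(x1,x2)*g$$(x1,x2)) / \<sigma>)"
      by (subst sum.swap) (simp add: sum_divide_distrib)
    also have "\<dots> = (\<Sum>x2<M. \<sigma>^2 / \<sigma>)" by (intro sum.cong refl) (simp add: grd)
    also have "\<dots> = real M * \<sigma>" using sne by (simp add: power2_eq_square)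
    finally show ?thesis .
  qed
  have c4: "(\<Sum>x1<M. \<Sum>x2<M. complex_of_real (g $$ (x1, x2)) * mtrace (rhoD D * kron (Gam M x1) (A2m g M \<sigma> x2)))
      = complex_of_real (real M * norm2 g)"
  proof -
    have "(\<Sum>x1<M. \<Sum>x2<M. complex_of_real (g $$ (x1, x2)) * mtrace (rhoD D * kron (Gam M x1) (A2m g M \<sigma> x2)))
       = (\<Sum>x1<M. \<Sum>x2<M. complex_of_real (g $$ (x1, x2) * (g $$ (x1, x2) / \<sigma>)))"
      by (intro sum.cong refl) (simp add: tm)
    also have "\<dots> = complex_of_real (\<Sum>x1<M. \<Sum>x2<M. g$$(x1,x2)*(g$$(x1,x2)/\<sigma>))" by simp
    also have "\<dots> = complex_of_real (real M * norm2 g)" using r n2 by simp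
    finally show ?thesis .
  qed
  show ?thesis
    apply (rule exI[of _ D], rule exI[of _ D], rule exI[of _ "rhoD D"], rule exI[of _ "Gam M"], rule exI[of _ "A2m g M \<sigma>"])
    using D c1 c2 c3 c4 by blast
qed

end
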